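(* Let $G_1$ and $G_2$ be two graphs of order $n$ which have the same Laplacian spectra but different degree sequences. Let $\Gamma$ be an arbitrary graph, where, if $G_1$ or $G_2$ has an isolated vertex, $\Gamma$ is assumed to have at least $2$ vertices. Then $G_1\vee\Gamma$ and $G_2\vee\Gamma$ have the same Laplacian spectra for every such $\Gamma$. Moreover, there is a finite set $S$ consisting of at most $n-1$ integers such that $Z_{G_1\vee\Gamma}\ne Z_{G_2\vee\Gamma}$ for every such $\Gamma$ whose order does not lie in $S$.
   Context: Graphs are finite and simple. The Laplacian of a graph is $L=D-A$ ($D$ degree matrix, $A$ adjacency matrix). The join $G\vee\Gamma$ is the disjoint union of $G$ and $\Gamma$ with all edges between a vertex of $G$ and a vertex of $\Gamma$ added. $Z_G$ is the Ihara zeta function: for a graph with $n_G$ vertices and $m_G$ edges, $Z_G(t)=(1-t^2)^{n_G-m_G}\det(I-tA+t^2(D-I))^{-1}$ (equivalently the product $\prod_{[\gamma]}(1-t^{\ell(\gamma)})^{-1}$ over rotation classes of primitive closed geodesics). *)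

theory Defs
  imports "HOL-Computational_Algebra.Formal_Power_Series" "HOL-Computational_Algebra.Polynomial"
    "HOL-Combinatorics.Permutations" "HOL-Library.Multiset"
begin

definition graph :: "'a set \<Rightarrow> ('a \<Rightarrow> 'a \<Rightarrow> bool) \<Rightarrow> bool" where
  "graph V E \<longleftrightarrow> finite V \<and> (\<forall>x y. E x y \<longrightarrow> x \<in> V \<and> y \<in> V \<and> x \<noteq> y \<and> E y x)"

definition deg :: "'a set \<Rightarrow> ('a \<Rightarrow> 'a \<Rightarrow> bool) \<Rightarrow> 'a \<Rightarrow> nat" where
  "deg V E x = card {y \<in> V. E x y}"

definition num_edges :: "('a \<Rightarrow> 'a \<Rightarrow> bool) \<Rightarrow> nat" where
  "num_edges E = card {{x, y} | x y. E x y}"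

definition degree_seq :: "'a set \<Rightarrow> ('a \<Rightarrow> 'a \<Rightarrow> bool) \<Rightarrow> nat multiset" where
  "degree_seq V E = image_mset (deg V E) (mset_set V)"

definition has_isolated :: "'a set \<Rightarrow> ('a \<Rightarrow> 'a \<Rightarrow> bool) \<Rightarrow> bool" where
  "has_isolated V E \<longleftrightarrow> (\<exists>v \<in> V. deg V E v = 0)"

definition det_on :: "'a set \<Rightarrow> ('a \<Rightarrow> 'a \<Rightarrow> 'r::comm_ring_1) \<Rightarrow> 'r" where
  "det_on V M = (\<Sum>p | p permutes V. of_int (sign p) * (\<Prod>i\<in>V. M i (p i)))"

definition adj_mat :: "('a \<Rightarrow> 'a \<Rightarrow> bool) \<Rightarrow> 'a \<Rightarrow> 'a \<Rightarrow> real" where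
  "adj_mat E x y = (if E x y then 1 else 0)"

definition laplacian :: "'a set \<Rightarrow> ('a \<Rightarrow> 'a \<Rightarrow> bool) \<Rightarrow> 'a \<Rightarrow> 'a \<Rightarrow> real" where
  "laplacian V E x y = (if x = y then real (deg V E x) else 0) - adj_mat E x y"

text \<open>Characteristic polynomial det(xI - L) and the Laplacian spectrum
  (multiset of its roots; L is real symmetric so all eigenvalues are real).\<close>
definition lap_charpoly :: "'a set \<Rightarrow> ('a \<Rightarrow> 'a \<Rightarrow> bool) \<Rightarrow> real poly" where
  "lap_charpoly V E = det_on V (\<lambda>x y. (if x = y then [:0, 1:] else 0) - [:laplacian V E x y:])"

definition lap_spectrum :: "'a set \<Rightarrow> ('a \<Rightarrow> 'a \<Rightarrow> bool) \<Rightarrow> real multiset" where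
  "lap_spectrum V E = proots (lap_charpoly V E)"

definition ihara_zeta :: "'a set \<Rightarrow> ('a \<Rightarrow> 'a \<Rightarrow> bool) \<Rightarrow> real fps" where
  "ihara_zeta V E =
     (let q = 1 - fps_X ^ 2;
          n = card V; m = num_edges E;
          pre = (if m \<le> n then q ^ (n - m) else inverse (q ^ (m - n)))
      in pre * inverse (det_on V (\<lambda>x y.
            (if x = y then 1 else 0) - fps_const (adj_mat E x y) * fps_X
            + fps_const ((if x = y then real (deg V E x) else 0) - (if x = y then 1 else 0)) * fps_X ^ 2)))"

definition join_V :: "'a set \<Rightarrow> 'b set \<Rightarrow> ('a + 'b) set" where
  "join_V V W = Inl ` V \<union> Inr ` W"

fun join_E :: "'a set \<Rightarrow> ('a \<Rightarrow> 'a \<Rightarrow> bool) \<Rightarrow> 'b set \<Rightarrow> ('b \<Rightarrow> 'b \<Rightarrow> bool)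
    \<Rightarrow> 'a + 'b \<Rightarrow> 'a + 'b \<Rightarrow> bool" where
  "join_E V E W F (Inl x) (Inl y) = E x y"
| "join_E V E W F (Inr x) (Inr y) = F x y"
| "join_E V E W F (Inl x) (Inr y) = (x \<in> V \<and> y \<in> W)"
| "join_E V E W F (Inr x) (Inl y) = (x \<in> W \<and> y \<in> V)"

end

theory Submission
  imports Defs "Jordan_Normal_Form.Determinant" "HOL-Computational_Algebra.Polynomial_FPS"
begin

lemma det_on_bij:
  assumes bij: "bij_betw f U V" and fin: "finite U"
  shows "det_on V M = det_on U (\<lambda>i j. M (f i) (f j))"
proof -
  define g where "g = inv_into U f"
  have gf: "\<And>x. x \<in> U \<Longrightarrow> g (f x) = x" using bij unfolding g_def by (simp add: bij_betw_inv_into_left)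
  have bijg: "bij_betw g V U" unfolding g_def by (rule bij_betw_inv_into[OF bij])
  have fg: "\<And>y. y \<in> V \<Longrightarrow> f (g y) = y" using bij unfolding g_def by (simp add: bij_betw_inv_into_right)
  have finV: "finite V" using bij fin bij_betw_finite by blast
  have injf: "inj_on f U" using bij bij_betw_def by blast
  have injg: "inj_on g V" using bijg bij_betw_def by blast
  show ?thesis unfolding det_on_def
  proof (rule sym, rule sum.reindex_bij_witness[where j="map_permutation U f" and i="map_permutation V g"])
    fix p assume "p \<in> {p. p permutes V}"
    then have p: "p permutes V" by simp
    show "map_permutation U f (map_permutation V g p) = p"
      by (rule map_permutation_compose_inv[OF bijg p fg])
    show "map_permutation V g p \<in> {p. p permutes U}"
      using map_permutation_permutes[OF bijg p] by simp
  next
    fix q assume "q \<in> {p. p permutes U}"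
    then have q: "q permutes U" by simp
    show "map_permutation V g (map_permutation U f q) = q"
      by (rule map_permutation_compose_inv[OF bij q gf])
    show "map_permutation U f q \<in> {p. p permutes V}"
      using map_permutation_permutes[OF bij q] by simp
    have s: "sign (map_permutation U f q) = sign q"
      by (rule sign_map_permutation[OF injf q fin])
    have "(\<Prod>i\<in>V. M i (map_permutation U f q i)) = (\<Prod>i\<in>U. M (f i) (map_permutation U f q (f i)))"
      using prod.reindex_bij_betw[OF bij, of "\<lambda>i. M i (map_permutation U f q i)"] by simp
    also have "\<dots> = (\<Prod>i\<in>U. M (f i) (f (q i)))"
      using map_permutation_apply[OF injf] by (intro prod.cong refl) auto
    finally show "of_int (sign (map_permutation U f q)) * (\<Prod>i\<in>V. M i (map_permutation U f q i)) =
       of_int (sign q) * (\<Prod>i\<in>U. M (f i) (f (q i)))" using s by simp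
  qed
qed

lemma det_on_mat:
  "det_on {0..<N} M = det (mat N N (\<lambda>(i,j). M i j))"
  unfolding det_on_def det_def
  by (auto intro!: sum.cong arg_cong2[where f="(*)"] prod.cong simp: permutes_in_image)

lemma step2:
  fixes B :: "'r::idom mat" and a b :: 'r
  assumes B: "B \<in> carrier_mat m m" and m: "m > 0"
    and rowB: "\<And>i. i < m \<Longrightarrow> (\<Sum>j<m. B $$ (i,j)) = b"
  shows "b * det (mat m m (\<lambda>(i,j). a * B $$ (i,j) - of_nat n))
       = (a * b - of_nat n * of_nat m) * a ^ (m - 1) * det B"
proof -
  define c where "c = a * b - of_nat n * of_nat m"
  define C where "C = mat m m (\<lambda>(i,j). a * B $$ (i,j) - of_nat n)"
  define Y where "Y = mat m m (\<lambda>(i,j). if i = j then 1 else if j = 0 then 1 else (0::'r))"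
  define Z where "Z = mat m m (\<lambda>(i,j). if j = 0 then 1 else B $$ (i,j))"
  define Db where "Db = mat m m (\<lambda>(i,j). if i = j then (if i = 0 then b else 1) else (0::'r))"
  define T where "T = mat m m (\<lambda>(i,j). if j = 0 then (if i = 0 then c else 0)
        else if i = 0 then - of_nat n else if i = j then a else 0)"
  have cY: "Y \<in> carrier_mat m m" "Z \<in> carrier_mat m m" "Db \<in> carrier_mat m m" "T \<in> carrier_mat m m"
     "C \<in> carrier_mat m m"
    unfolding Y_def Z_def Db_def T_def C_def by auto
  have detY: "det Y = 1"
  proof -
    have "det Y = prod_list (diag_mat Y)"
      by (rule det_lower_triangular[OF _ cY(1)]) (auto simp: Y_def)
    also have "diag_mat Y = replicate m 1"
      by (auto simp: diag_mat_def Y_def intro!: nth_equalityI)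
    finally show ?thesis by simp
  qed
  have detDb: "det Db = b"
  proof -
    have "det Db = prod_list (diag_mat Db)"
      by (rule det_lower_triangular[OF _ cY(3)]) (auto simp: Db_def)
    also have "diag_mat Db = b # replicate (m - 1) 1"
      using m by (auto simp: diag_mat_def Db_def intro!: nth_equalityI simp: nth_Cons')
    finally show ?thesis by simp
  qed
  have detT: "det T = c * a ^ (m - 1)"
  proof -
    have "det T = prod_list (diag_mat T)"
      by (rule det_upper_triangular[OF _ cY(4)]) (auto simp: T_def upper_triangular_def)
    also have "diag_mat T = c # replicate (m - 1) a"
      using m by (auto simp: diag_mat_def T_def intro!: nth_equalityI simp: nth_Cons')
    finally show ?thesis by simp
  qed
  have sumY: "(\<Sum>k<m. f k * Y $$ (k, j)) = (if j = 0 then (\<Sum>k<m. f k) else f j)" if j: "j < m" for f j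
  proof (cases "j = 0")
    case True
    then show ?thesis by (auto simp: Y_def intro!: sum.cong)
  next
    case False
    have "(\<Sum>k<m. f k * Y $$ (k, j)) = (\<Sum>k<m. if k = j then f k else 0)"
      using False j by (intro sum.cong) (auto simp: Y_def)
    then show ?thesis using False j by simp
  qed
  have BY: "B * Y = Z * Db"
  proof (rule eq_matI)
    fix i j assume i: "i < dim_row (Z * Db)" and j: "j < dim_col (Z * Db)"
    then have i: "i < m" and j: "j < m" using cY by auto
    have "(B * Y) $$ (i,j) = (\<Sum>k<m. B $$ (i,k) * Y $$ (k, j))"
      using i j B cY by (simp add: scalar_prod_def atLeast0LessThan)
    also have "\<dots> = (if j = 0 then b else B $$ (i,j))" using sumY[OF j] rowB[OF i] by simp
    also have "\<dots> = (\<Sum>k<m. Z $$ (i,k) * Db $$ (k, j))"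
    proof -
      have "(\<Sum>k<m. Z $$ (i,k) * Db $$ (k, j)) = (\<Sum>k<m. if k = j then Z $$ (i,k) * Db $$ (k,j) else 0)"
        using i j by (intro sum.cong) (auto simp: Db_def)
      also have "\<dots> = Z $$ (i,j) * Db $$ (j,j)" using j by simp
      finally show ?thesis using i j by (simp add: Z_def Db_def)
    qed
    also have "\<dots> = (Z * Db) $$ (i,j)"
      using i j cY by (simp add: scalar_prod_def atLeast0LessThan)
    finally show "(B * Y) $$ (i,j) = (Z * Db) $$ (i,j)" .
  qed (use B cY in auto)
  have CY: "C * Y = Z * T"
  proof (rule eq_matI)
    fix i j assume i: "i < dim_row (Z * T)" and j: "j < dim_col (Z * T)"
    then have i: "i < m" and j: "j < m" using cY by auto
    have "(C * Y) $$ (i,j) = (\<Sum>k<m. C $$ (i,k) * Y $$ (k, j))"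
      using i j cY by (simp add: scalar_prod_def atLeast0LessThan)
    also have "\<dots> = (if j = 0 then c else a * B $$ (i,j) - of_nat n)"
    proof (cases "j = 0")
      case True
      have "(\<Sum>k<m. C $$ (i,k)) = (\<Sum>k<m. a * B $$ (i,k) - of_nat n)"
        using i by (intro sum.cong) (auto simp: C_def)
      also have "\<dots> = a * b - of_nat m * of_nat n"
        using rowB[OF i] by (simp add: sum_subtractf sum_distrib_left[symmetric])
      finally show ?thesis using sumY[OF j] True by (simp add: c_def mult.commute)
    next
      case False
      then show ?thesis using sumY[OF j] i j by (simp add: C_def)
    qed
    also have "\<dots> = (\<Sum>k<m. Z $$ (i,k) * T $$ (k, j))"
    proof (cases "j = 0")
      case True
      have "(\<Sum>k<m. Z $$ (i,k) * T $$ (k, j)) = (\<Sum>k<m. if k = 0 then c else 0)"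
        using i j True by (intro sum.cong) (auto simp: Z_def T_def)
      then show ?thesis using True m by simp
    next
      case False
      have "(\<Sum>k<m. Z $$ (i,k) * T $$ (k, j)) = (\<Sum>k<m. (if k = 0 then - of_nat n else 0) + (if k = j then a * B $$ (i,j) else 0))"
        using i j False by (intro sum.cong) (auto simp: Z_def T_def)
      also have "\<dots> = - of_nat n + a * B $$ (i,j)" using m j by (simp add: sum.distrib)
      finally show ?thesis using False by simp
    qed
    also have "\<dots> = (Z * T) $$ (i,j)"
      using i j cY by (simp add: scalar_prod_def atLeast0LessThan)
    finally show "(C * Y) $$ (i,j) = (Z * T) $$ (i,j)" .
  qed (use cY in auto)
  have "det B = det Z * b"
    using arg_cong[OF BY, of det] det_mult[OF B cY(1)] det_mult[OF cY(2) cY(3)] detY detDb by simp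
  moreover have "det C = det Z * (c * a ^ (m - 1))"
    using arg_cong[OF CY, of det] det_mult[OF cY(5) cY(1)] det_mult[OF cY(2) cY(4)] detY detT by simp
  ultimately show ?thesis unfolding C_def[symmetric] c_def[symmetric] by (simp add: ac_simps)
qed

lemma block_det:
  fixes A B :: "'r::idom mat" and a b :: 'r
  assumes A: "A \<in> carrier_mat n n" and B: "B \<in> carrier_mat m m" and m: "m > 0" and a: "a \<noteq> 0"
    and rowA: "\<And>i. i < n \<Longrightarrow> (\<Sum>j<n. A $$ (i,j)) = a"
    and rowB: "\<And>i. i < m \<Longrightarrow> (\<Sum>j<m. B $$ (i,j)) = b"
  shows "a * b * det (four_block_mat A (mat n m (\<lambda>_. 1)) (mat m n (\<lambda>_. 1)) B)
       = (a * b - of_nat n * of_nat m) * det A * det B"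
proof -
  define J where "J = (mat n m (\<lambda>_. 1) :: 'r mat)"
  define Jt where "Jt = (mat m n (\<lambda>_. 1) :: 'r mat)"
  define N where "N = (mat n m (\<lambda>_. -1) :: 'r mat)"
  define C where "C = mat m m (\<lambda>(i,j). a * B $$ (i,j) - of_nat n)"
  define P where "P = four_block_mat A J Jt B"
  define X where "X = four_block_mat (1\<^sub>m n) N (0\<^sub>m m n) (a \<cdot>\<^sub>m 1\<^sub>m m)"
  have c: "J \<in> carrier_mat n m" "Jt \<in> carrier_mat m n" "N \<in> carrier_mat n m" "C \<in> carrier_mat m m"
    unfolding J_def Jt_def N_def C_def by auto
  have cP: "P \<in> carrier_mat (n+m) (n+m)" "X \<in> carrier_mat (n+m) (n+m)"
    unfolding P_def X_def using A B c by auto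
  have detX: "det X = a ^ m"
    unfolding X_def by (subst det_four_block_mat_lower_left_zero[of _ n _ m]) (use c in auto)
  have TR: "A * N + J * (a \<cdot>\<^sub>m 1\<^sub>m m) = 0\<^sub>m n m"
  proof (rule eq_matI)
    fix i j assume "i < dim_row (0\<^sub>m n m :: 'r mat)" "j < dim_col (0\<^sub>m n m :: 'r mat)"
    then have i: "i < n" and j: "j < m" by auto
    have "(A * N) $$ (i,j) = (\<Sum>k<n. A $$ (i,k) * (-1))"
      using i j A c by (simp add: scalar_prod_def atLeast0LessThan N_def)
    also have "\<dots> = - a" using rowA[OF i] by (simp add: sum_negf)
    finally have 1: "(A * N) $$ (i,j) = - a" .
    have "(J * (a \<cdot>\<^sub>m 1\<^sub>m m)) $$ (i,j) = (\<Sum>k<m. a * (if k = j then 1 else 0))"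
      using i j c by (simp add: scalar_prod_def atLeast0LessThan J_def)
    also have "\<dots> = (\<Sum>k<m. (if k = j then a else 0))"
      by (rule sum.cong) auto
    also have "\<dots> = a" using j by simp
    finally have 2: "(J * (a \<cdot>\<^sub>m 1\<^sub>m m)) $$ (i,j) = a" .
    show "(A * N + J * (a \<cdot>\<^sub>m 1\<^sub>m m)) $$ (i,j) = 0\<^sub>m n m $$ (i,j)"
      using 1 2 i j A c by simp
  qed (use A c in auto)
  have BR: "Jt * N + B * (a \<cdot>\<^sub>m 1\<^sub>m m) = C"
  proof (rule eq_matI)
    fix i j assume "i < dim_row C" "j < dim_col C"
    then have i: "i < m" and j: "j < m" using c by auto
    have "(Jt * N) $$ (i,j) = (\<Sum>k<n. - 1)"
      using i j c by (simp add: scalar_prod_def atLeast0LessThan N_def Jt_def)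
    then have 1: "(Jt * N) $$ (i,j) = - of_nat n" by simp
    have "(B * (a \<cdot>\<^sub>m 1\<^sub>m m)) $$ (i,j) = (\<Sum>k<m. B $$ (i,k) * (a * (if k = j then 1 else 0)))"
      using i j B by (simp add: scalar_prod_def atLeast0LessThan) 
    also have "\<dots> = (\<Sum>k<m. (if k = j then B $$ (i,k) * a else 0))"
      by (rule sum.cong) auto
    also have "\<dots> = B $$ (i,j) * a" using j by simp
    finally have 2: "(B * (a \<cdot>\<^sub>m 1\<^sub>m m)) $$ (i,j) = B $$ (i,j) * a" .
    show "(Jt * N + B * (a \<cdot>\<^sub>m 1\<^sub>m m)) $$ (i,j) = C $$ (i,j)"
      using 1 2 i j B c by (simp add: C_def mult.commute)
  qed (use B c in auto)
  have PX: "P * X = four_block_mat A (0\<^sub>m n m) Jt C"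
    unfolding P_def X_def
    apply (subst mult_four_block_mat[OF A c(1) c(2) B, of _ n _ m])
    using A B c TR BR by auto
  have "det P * a ^ m = det A * det C"
    using arg_cong[OF PX, of det] det_mult[OF cP] detX
      det_four_block_mat_upper_right_zero[OF A refl c(2) c(4)] by simp
  moreover have "b * det C = (a * b - of_nat n * of_nat m) * a ^ (m - 1) * det B"
    unfolding C_def by (rule step2[OF B m rowB])
  ultimately have "a ^ (m - 1) * (a * b * det P) = a ^ (m - 1) * ((a * b - of_nat n * of_nat m) * det A * det B)"
  proof -
    assume h1: "det P * a ^ m = det A * det C" and h2: "b * det C = (a * b - of_nat n * of_nat m) * a ^ (m - 1) * det B"
    have am: "a ^ m = a * a ^ (m - 1)" using m by (cases m) auto
    have "a ^ (m - 1) * (a * b * det P) = b * (det P * a ^ m)" using am by (simp add: ac_simps)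
    also have "\<dots> = det A * (b * det C)" using h1 by (simp add: ac_simps)
    also have "\<dots> = a ^ (m - 1) * ((a * b - of_nat n * of_nat m) * det A * det B)" using h2 by (simp add: ac_simps)
    finally show ?thesis .
  qed
  then show ?thesis using a unfolding P_def J_def Jt_def by simp
qed

lemma det_on_pcompose:
  "det_on V (\<lambda>i j. pcompose (M i j) s) = pcompose (det_on V M) s"
  unfolding det_on_def
  by (simp add: pcompose_sum pcompose_mult pcompose_prod of_int_poly pcompose_smult)

lemma det_on_fps_of_poly:
  "det_on V (\<lambda>i j. fps_of_poly (M i j)) = fps_of_poly (det_on V M)"
  unfolding det_on_def
  by (simp add: fps_of_poly_sum fps_of_poly_mult fps_of_poly_prod of_int_poly fps_of_poly_smult fps_of_int)

lemma dvd_pcompose: "(p::'a::comm_ring_1 poly) dvd q \<Longrightarrow> pcompose p r dvd pcompose q r"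
  by (auto simp: dvd_def pcompose_mult)

lemma pcompose_power_left': "pcompose ((p::'a::comm_ring_1 poly) ^ k) r = (pcompose p r) ^ k"
  by (induction k) (auto simp: pcompose_mult pcompose_1)

lemma order_shift:
  fixes p :: "real poly"
  assumes p: "p \<noteq> 0"
  shows "order x (pcompose p [:-m,1:]) = order (x - m) p"
proof -
  have deg: "degree [:-m, 1:] > 0" "degree [:m, 1:] > 0" by auto
  have q: "pcompose p [:-m,1:] \<noteq> 0" using pcompose_eq_0[OF _ deg(1)] p by blast
  have lin1: "pcompose [:m - x, 1:] [:-m,1:] = [:-x, 1:]" by (simp add: pcompose_pCons)
  have lin2: "pcompose [:-x, 1:] [:m,1:] = [:-(x-m), 1:]" by (simp add: pcompose_pCons)
  have bck: "pcompose (pcompose p [:-m,1:]) [:m,1:] = p"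
    by (simp add: pcompose_assoc[symmetric] pcompose_pCons)
  have 1: "[:-x, 1:] ^ k dvd pcompose p [:-m,1:]" if "[:-(x-m), 1:] ^ k dvd p" for k
    using dvd_pcompose[OF that, of "[:-m,1:]"] by (simp add: pcompose_power_left' lin1)
  have 2: "[:-(x-m), 1:] ^ k dvd p" if "[:-x, 1:] ^ k dvd pcompose p [:-m,1:]" for k
    using dvd_pcompose[OF that, of "[:m,1:]"] by (simp add: pcompose_power_left' lin2 bck)
  show ?thesis
  proof (rule antisym)
    show "order x (pcompose p [:-m,1:]) \<le> order (x - m) p"
      using order_divides[of "x-m" "order x (pcompose p [:-m,1:])" p] 2[OF order_1] p by simp
    show "order (x - m) p \<le> order x (pcompose p [:-m,1:])"
      using order_divides[of x "order (x - m) p" "pcompose p [:-m,1:]"] 1[OF order_1] q by simp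
  qed
qed

lemma count_proots_shift:
  fixes p :: "real poly"
  shows "count (proots (pcompose p [:-m,1:])) x = count (proots p) (x - m)"
proof (cases "p = 0")
  case True then show ?thesis by simp
next
  case False
  have deg: "degree [:-m, 1:] > 0" by auto
  have q: "pcompose p [:-m,1:] \<noteq> 0" using pcompose_eq_0[OF _ deg] False by blast
  show ?thesis using False q order_shift[OF False] by simp
qed

lemma proots_shift_eq:
  fixes p q :: "real poly"
  assumes "proots p = proots q"
  shows "proots (pcompose p [:-m,1:]) = proots (pcompose q [:-m,1:])"
  by (rule multiset_eqI) (simp add: count_proots_shift assms)

lemma coeff_mult_bound:
  fixes p q :: "'a::comm_semiring_1 poly"
  assumes "degree p \<le> d1" "degree q \<le> d2"
  shows "coeff (p * q) (d1 + d2) = coeff p d1 * coeff q d2"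
proof -
  have "coeff (p * q) (d1 + d2) = (\<Sum>i\<le>d1 + d2. coeff p i * coeff q (d1 + d2 - i))"
    by (rule coeff_mult)
  also have "\<dots> = (\<Sum>i\<le>d1 + d2. if i = d1 then coeff p d1 * coeff q d2 else 0)"
  proof (rule sum.cong)
    fix i assume "i \<in> {..d1+d2}"
    show "coeff p i * coeff q (d1 + d2 - i) = (if i = d1 then coeff p d1 * coeff q d2 else 0)"
    proof (cases "i < d1")
      case True
      then have "d1 + d2 - i > d2" by simp
      then have "coeff q (d1 + d2 - i) = 0" using assms(2) by (intro coeff_eq_0) simp
      then show ?thesis using True by simp
    next
      case False
      show ?thesis
      proof (cases "i = d1")
        case False': False
        with False have "i > d1" by simp
        then have "coeff p i = 0" using assms(1) by (intro coeff_eq_0) simp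
        then show ?thesis using False' by simp
      qed simp
    qed
  qed simp
  also have "\<dots> = coeff p d1 * coeff q d2" by simp
  finally show ?thesis .
qed

lemma coeff_prod_bound_aux:
  fixes f :: "'b \<Rightarrow> 'a::comm_semiring_1 poly"
  assumes "finite I"
  shows "(\<forall>i\<in>I. degree (f i) \<le> k) \<longrightarrow> coeff (\<Prod>i\<in>I. f i) (k * card I) = (\<Prod>i\<in>I. coeff (f i) k)
        \<and> degree (\<Prod>i\<in>I. f i) \<le> k * card I"
  using assms
proof (induction I rule: finite_induct)
  case empty
  show ?case by simp
next
  case (insert a F)
  show ?case
  proof
    assume d: "\<forall>i\<in>insert a F. degree (f i) \<le> k"
    then have IH: "coeff (\<Prod>i\<in>F. f i) (k * card F) = (\<Prod>i\<in>F. coeff (f i) k)"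
      "degree (\<Prod>i\<in>F. f i) \<le> k * card F" using insert by auto
    have da: "degree (f a) \<le> k" using d by auto
    have "coeff (\<Prod>i\<in>insert a F. f i) (k * card (insert a F)) = coeff (f a * (\<Prod>i\<in>F. f i)) (k + k * card F)"
      using insert by simp
    also have "\<dots> = coeff (f a) k * coeff (\<Prod>i\<in>F. f i) (k * card F)"
      by (rule coeff_mult_bound[OF da IH(2)])
    also have "\<dots> = (\<Prod>i\<in>insert a F. coeff (f i) k)" using insert IH by simp
    finally have 1: "coeff (\<Prod>i\<in>insert a F. f i) (k * card (insert a F)) = (\<Prod>i\<in>insert a F. coeff (f i) k)" .
    have "degree (\<Prod>i\<in>insert a F. f i) = degree (f a * (\<Prod>i\<in>F. f i))" using insert by simp
    also have "\<dots> \<le> degree (f a) + degree (\<Prod>i\<in>F. f i)" by (rule degree_mult_le)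
    also have "\<dots> \<le> k * card (insert a F)" using da IH insert by simp
    finally show "coeff (\<Prod>i\<in>insert a F. f i) (k * card (insert a F)) = (\<Prod>i\<in>insert a F. coeff (f i) k)
        \<and> degree (\<Prod>i\<in>insert a F. f i) \<le> k * card (insert a F)" using 1 by simp
  qed
qed

lemma coeff_prod_bound:
  fixes f :: "'b \<Rightarrow> 'a::comm_semiring_1 poly"
  assumes "finite I" "\<And>i. i \<in> I \<Longrightarrow> degree (f i) \<le> k"
  shows "coeff (\<Prod>i\<in>I. f i) (k * card I) = (\<Prod>i\<in>I. coeff (f i) k)"
       "degree (\<Prod>i\<in>I. f i) \<le> k * card I"
  using coeff_prod_bound_aux[OF assms(1), of f k] assms(2) by auto

lemma coeff_of_int_mult: "coeff (of_int s * (P::'a::comm_ring_1 poly)) n = of_int s * coeff P n"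
  by (simp add: of_int_poly)

lemma coeff_det_on:
  fixes M :: "'b \<Rightarrow> 'b \<Rightarrow> 'a::comm_ring_1 poly"
  assumes fin: "finite V" and deg: "\<And>i j. i \<in> V \<Longrightarrow> j \<in> V \<Longrightarrow> degree (M i j) \<le> k"
  shows "coeff (det_on V M) (k * card V) = det_on V (\<lambda>i j. coeff (M i j) k)"
        "degree (det_on V M) \<le> k * card V"
proof -
  have d: "degree (M i (p i)) \<le> k" if "p permutes V" "i \<in> V" for p i
    using deg[of i "p i"] permutes_in_image[OF that(1), of i] that(2) by simp
  have c: "coeff (of_int (sign p) * (\<Prod>i\<in>V. M i (p i))) (k * card V) = of_int (sign p) * (\<Prod>i\<in>V. coeff (M i (p i)) k)"
    if "p permutes V" for p
  proof -
    have "coeff (of_int (sign p) * (\<Prod>i\<in>V. M i (p i))) (k * card V) = of_int (sign p) * coeff (\<Prod>i\<in>V. M i (p i)) (k * card V)"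
      by (rule coeff_of_int_mult)
    also have "\<dots> = of_int (sign p) * (\<Prod>i\<in>V. coeff (M i (p i)) k)"
      using coeff_prod_bound(1)[OF fin d[OF that]] by simp
    finally show ?thesis .
  qed
  show "coeff (det_on V M) (k * card V) = det_on V (\<lambda>i j. coeff (M i j) k)"
    unfolding det_on_def coeff_sum
    by (intro sum.cong refl) (use c in simp)
  show "degree (det_on V M) \<le> k * card V"
    unfolding det_on_def
  proof (rule degree_sum_le)
    fix p assume "p \<in> {p. p permutes V}"
    then have "degree (\<Prod>i\<in>V. M i (p i)) \<le> k * card V" using coeff_prod_bound(2)[OF fin d] by simp
    moreover have "degree (of_int (sign p) * (\<Prod>i\<in>V. M i (p i))) \<le> degree (\<Prod>i\<in>V. M i (p i))"
      using degree_mult_le[of "of_int (sign p)" "\<Prod>i\<in>V. M i (p i)"] by simp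
    ultimately show "degree (of_int (sign p) * (\<Prod>i\<in>V. M i (p i))) \<le> k * card V" by linarith
  qed (rule finite_permutations[OF fin])
qed

lemma det_on_diag:
  assumes fin: "finite V"
  shows "det_on V (\<lambda>i j. if i = j then f i else 0) = (\<Prod>i\<in>V. f i)"
proof -
  have "det_on V (\<lambda>i j. if i = j then f i else 0) =
     (\<Sum>p\<in>{p. p permutes V}. if p = id then (\<Prod>i\<in>V. f i) else 0)"
    unfolding det_on_def
  proof (intro sum.cong refl)
    fix p assume "p \<in> {p. p permutes V}"
    then have p: "p permutes V" by simp
    show "of_int (sign p) * (\<Prod>i\<in>V. if i = p i then f i else 0) = (if p = id then \<Prod>i\<in>V. f i else 0)"
    proof (cases "p = id")
      case True then show ?thesis by simp
    next
      case False
      then obtain i where "p i \<noteq> i" by (metis eq_id_iff)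
      then have "i \<in> V" using p permutes_not_in by metis
      then have "(\<Prod>i\<in>V. if i = p i then f i else 0) = 0"
        using fin \<open>p i \<noteq> i\<close> by (intro prod_zero bexI[of _ i]) auto
      then show ?thesis using False by simp
    qed
  qed
  also have "\<dots> = (\<Prod>i\<in>V. f i)" using permutes_id[of V] by (simp add: sum.delta[OF finite_permutations[OF fin]])
  finally show ?thesis .
qed

definition cm :: "'a set \<Rightarrow> ('a \<Rightarrow> 'a \<Rightarrow> bool) \<Rightarrow> 'a \<Rightarrow> 'a \<Rightarrow> real poly" where
  "cm V E x y = (if x = y then [:0, 1:] else 0) - [:laplacian V E x y:]"

lemma lap_charpoly_cm: "lap_charpoly V E = det_on V (cm V E)"
  unfolding lap_charpoly_def cm_def ..

lemma det_on_cong: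
  assumes "\<And>i j. i \<in> V \<Longrightarrow> j \<in> V \<Longrightarrow> M i j = M' i j"
  shows "det_on V M = det_on V M'"
  unfolding det_on_def
proof (intro sum.cong refl arg_cong2[where f="(*)"] prod.cong)
  fix p i assume "p \<in> {p. p permutes V}" "i \<in> V"
  then show "M i (p i) = M' i (p i)" using assms permutes_in_image by fastforce
qed

lemma sum_pconst: "(\<Sum>v\<in>A. [:f v:]) = [:\<Sum>v\<in>A. f v:]"
proof (cases "finite A")
  case True
  then show ?thesis by (induction A rule: finite_induct) auto
qed simp

lemma graph_finite: "graph V E \<Longrightarrow> finite V" unfolding graph_def by simp

lemma sum_adj: "graph V E \<Longrightarrow> (\<Sum>v\<in>V. Defs.adj_mat E u v) = real (deg V E u)"
  unfolding Defs.adj_mat_def deg_def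
  by (simp add: sum.If_cases graph_finite Collect_conj_eq)

lemma rowsum_cm:
  assumes G: "graph V E" and u: "u \<in> V"
  shows "(\<Sum>v\<in>V. cm V E u v) = [:0, 1:]"
proof -
  have fin: "finite V" using G graph_finite by blast
  have "(\<Sum>v\<in>V. laplacian V E u v) = (\<Sum>v\<in>V. (if u = v then real (deg V E u) else 0)) - (\<Sum>v\<in>V. Defs.adj_mat E u v)"
    unfolding laplacian_def sum_subtractf by (intro arg_cong2[where f="(-)"] sum.cong) auto
  also have "\<dots> = 0" using u fin sum_adj[OF G] by simp
  finally have L: "(\<Sum>v\<in>V. laplacian V E u v) = 0" .
  have "(\<Sum>v\<in>V. cm V E u v) = (\<Sum>v\<in>V. (if u = v then [:0, 1:] else 0)) - (\<Sum>v\<in>V. [:laplacian V E u v:])"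
    unfolding cm_def sum_subtractf ..
  also have "\<dots> = [:0, 1:]" using u fin L by (simp add: sum_pconst)
  finally show ?thesis .
qed

lemma join_E_edge:
  assumes "graph V E"
  shows "join_E V E W F (Inl u) y \<longleftrightarrow> (\<exists>v. y = Inl v \<and> E u v) \<or> (\<exists>w. y = Inr w \<and> u \<in> V \<and> w \<in> W)"
  by (cases y) auto

lemma deg_join_Inl:
  assumes G: "graph V E" and H: "graph W F" and u: "u \<in> V"
  shows "deg (join_V V W) (join_E V E W F) (Inl u) = deg V E u + card W"
proof -
  have "{y \<in> join_V V W. join_E V E W F (Inl u) y} = Inl ` {v \<in> V. E u v} \<union> Inr ` W"
    (is "?L = ?R")
  proof -
    have "y \<in> ?L \<longleftrightarrow> y \<in> ?R" for y using u by (cases y) (auto simp: join_V_def)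
    then show ?thesis by blast
  qed
  moreover have "card (Inl ` {v \<in> V. E u v} \<union> Inr ` W) = card {v \<in> V. E u v} + card W"
    using graph_finite[OF G] graph_finite[OF H] by (subst card_Un_disjoint) (auto simp: card_image)
  ultimately show ?thesis unfolding deg_def by simp
qed

lemma deg_join_Inr:
  assumes G: "graph V E" and H: "graph W F" and w: "w \<in> W"
  shows "deg (join_V V W) (join_E V E W F) (Inr w) = deg W F w + card V"
proof -
  have "{y \<in> join_V V W. join_E V E W F (Inr w) y} = Inl ` V \<union> Inr ` {v \<in> W. F w v}"
    (is "?L = ?R")
  proof -
    have "y \<in> ?L \<longleftrightarrow> y \<in> ?R" for y using w by (cases y) (auto simp: join_V_def)
    then show ?thesis by blast
  qed
  moreover have "card (Inl ` V \<union> Inr ` {v \<in> W. F w v}) = card V + card {v \<in> W. F w v}"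
    using graph_finite[OF G] graph_finite[OF H] by (subst card_Un_disjoint) (auto simp: card_image)
  ultimately show ?thesis unfolding deg_def by simp
qed

lemma cm_join_ll:
  assumes G: "graph V E" and H: "graph W F" and u: "u \<in> V" and v: "v \<in> V"
  shows "cm (join_V V W) (join_E V E W F) (Inl u) (Inl v) = pcompose (cm V E u v) [:- real (card W), 1:]"
  using deg_join_Inl[OF G H u]
  by (auto simp: cm_def laplacian_def Defs.adj_mat_def pcompose_pCons)

lemma cm_join_rr:
  assumes G: "graph V E" and H: "graph W F" and u: "u \<in> W" and v: "v \<in> W"
  shows "cm (join_V V W) (join_E V E W F) (Inr u) (Inr v) = pcompose (cm W F u v) [:- real (card V), 1:]"
  using deg_join_Inr[OF G H u]
  by (auto simp: cm_def laplacian_def Defs.adj_mat_def pcompose_pCons)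

lemma cm_join_lr:
  assumes u: "u \<in> V" and v: "v \<in> W"
  shows "cm (join_V V W) (join_E V E W F) (Inl u) (Inr v) = 1"
        "cm (join_V V W) (join_E V E W F) (Inr v) (Inl u) = 1"
  using u v by (auto simp: cm_def laplacian_def Defs.adj_mat_def)

lemma join_charpoly:
  assumes G: "graph V E" and H: "graph W F" and Wne: "W \<noteq> {}"
  defines "a \<equiv> [:- real (card W), 1:]" and "b \<equiv> [:- real (card V), 1:]"
  shows "a * b * lap_charpoly (join_V V W) (join_E V E W F)
     = (a * b - of_nat (card V) * of_nat (card W)) * pcompose (lap_charpoly V E) a * pcompose (lap_charpoly W F) b"
proof -
  define n where "n = card V"
  define m where "m = card W"
  have finV: "finite V" and finW: "finite W" using G H graph_finite by blast+
  have m0: "m > 0" using finW Wne unfolding m_def by (simp add: card_gt_0_iff)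
  obtain fV where fV: "bij_betw fV {0..<n} V" using ex_bij_betw_nat_finite[OF finV] unfolding n_def by blast
  obtain fW where fW: "bij_betw fW {0..<m} W" using ex_bij_betw_nat_finite[OF finW] unfolding m_def by blast
  have fVin: "\<And>i. i < n \<Longrightarrow> fV i \<in> V" using fV by (auto simp: bij_betw_def)
  have fWin: "\<And>i. i < m \<Longrightarrow> fW i \<in> W" using fW by (auto simp: bij_betw_def)
  define g where "g i = (if i < n then Inl (fV i) else Inr (fW (i - n)))" for i
  have bijg: "bij_betw g {0..<n+m} (join_V V W)"
  proof -
    have injV: "inj_on fV {0..<n}" and injW: "inj_on fW {0..<m}" using fV fW by (auto simp: bij_betw_def)
    have imV: "fV ` {0..<n} = V" and imW: "fW ` {0..<m} = W" using fV fW by (auto simp: bij_betw_def)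
    have "inj_on g {0..<n+m}"
    proof (rule inj_onI)
      fix i j assume i: "i \<in> {0..<n+m}" and j: "j \<in> {0..<n+m}" and e: "g i = g j"
      consider "i < n" "j < n" | "i < n" "\<not> j < n" | "\<not> i < n" "j < n" | "\<not> i < n" "\<not> j < n" by blast
      then show "i = j"
      proof cases
        case 1
        then have "fV i = fV j" using e by (simp add: g_def)
        then show ?thesis using inj_onD[OF injV] 1 by simp
      next
        case 2 then show ?thesis using e by (simp add: g_def)
      next
        case 3 then show ?thesis using e by (simp add: g_def)
      next
        case 4
        then have "fW (i - n) = fW (j - n)" using e by (simp add: g_def)
        moreover have "i - n \<in> {0..<m}" "j - n \<in> {0..<m}" using i j 4 by auto
        ultimately have "i - n = j - n" using inj_onD[OF injW] by blast
        then show ?thesis using 4 by simp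
      qed
    qed
    moreover have "g ` {0..<n+m} = join_V V W"
    proof
      show "g ` {0..<n+m} \<subseteq> join_V V W"
        using fVin fWin by (auto simp: g_def join_V_def)
      show "join_V V W \<subseteq> g ` {0..<n+m}"
      proof
        fix y assume "y \<in> join_V V W"
        then consider v where "v \<in> V" "y = Inl v" | w where "w \<in> W" "y = Inr w" by (auto simp: join_V_def)
        then show "y \<in> g ` {0..<n+m}"
        proof cases
          case (1 v)
          then obtain i where "i < n" "v = fV i" using imV by auto
          then show ?thesis using 1 by (intro image_eqI[of _ _ i]) (auto simp: g_def)
        next
          case (2 w)
          then obtain k where "k < m" "w = fW k" using imW by auto
          then show ?thesis using 2 by (intro image_eqI[of _ _ "n + k"]) (auto simp: g_def)
        qed
      qed
    qed
    ultimately show ?thesis by (simp add: bij_betw_def)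
  qed
  let ?J = "join_V V W" and ?JE = "join_E V E W F"
  define A where "A = mat n n (\<lambda>(i,j). cm ?J ?JE (Inl (fV i)) (Inl (fV j)))"
  define B where "B = mat m m (\<lambda>(i,j). cm ?J ?JE (Inr (fW i)) (Inr (fW j)))"
  have cA: "A \<in> carrier_mat n n" and cB: "B \<in> carrier_mat m m" unfolding A_def B_def by auto
  have "lap_charpoly ?J ?JE = det_on {0..<n+m} (\<lambda>i j. cm ?J ?JE (g i) (g j))"
    unfolding lap_charpoly_cm by (rule det_on_bij[OF bijg]) simp
  also have "\<dots> = det (mat (n+m) (n+m) (\<lambda>(i,j). cm ?J ?JE (g i) (g j)))" by (rule det_on_mat)
  also have "mat (n+m) (n+m) (\<lambda>(i,j). cm ?J ?JE (g i) (g j)) = four_block_mat A (mat n m (\<lambda>_. 1)) (mat m n (\<lambda>_. 1)) B"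
  proof (rule eq_matI)
    fix i j assume i: "i < dim_row (four_block_mat A (mat n m (\<lambda>_. 1)) (mat m n (\<lambda>_. 1)) B)"
      and j: "j < dim_col (four_block_mat A (mat n m (\<lambda>_. 1)) (mat m n (\<lambda>_. 1)) B)"
    then have i: "i < n + m" and j: "j < n + m" using cA cB by auto
    show "mat (n+m) (n+m) (\<lambda>(i,j). cm ?J ?JE (g i) (g j)) $$ (i,j) =
        four_block_mat A (mat n m (\<lambda>_. 1)) (mat m n (\<lambda>_. 1)) B $$ (i,j)"
      using i j cA cB fVin[of i] fVin[of j] fWin[of "i - n"] fWin[of "j - n"]
      by (auto simp: g_def A_def B_def cm_join_lr)
  qed (use cA cB in auto)
  finally have P: "lap_charpoly ?J ?JE = det (four_block_mat A (mat n m (\<lambda>_. 1)) (mat m n (\<lambda>_. 1)) B)" .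
  have detA: "det A = pcompose (lap_charpoly V E) a"
  proof -
    have "det A = det_on {0..<n} (\<lambda>i j. cm ?J ?JE (Inl (fV i)) (Inl (fV j)))"
      unfolding A_def by (rule det_on_mat[symmetric])
    also have "\<dots> = det_on V (\<lambda>u v. cm ?J ?JE (Inl u) (Inl v))"
      by (rule det_on_bij[OF fV, symmetric]) simp
    also have "\<dots> = det_on V (\<lambda>u v. pcompose (cm V E u v) a)"
      unfolding a_def by (rule det_on_cong) (rule cm_join_ll[OF G H])
    also have "\<dots> = pcompose (lap_charpoly V E) a" by (simp add: det_on_pcompose lap_charpoly_cm)
    finally show ?thesis .
  qed
  have detB: "det B = pcompose (lap_charpoly W F) b"
  proof -
    have "det B = det_on {0..<m} (\<lambda>i j. cm ?J ?JE (Inr (fW i)) (Inr (fW j)))"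
      unfolding B_def by (rule det_on_mat[symmetric])
    also have "\<dots> = det_on W (\<lambda>u v. cm ?J ?JE (Inr u) (Inr v))"
      by (rule det_on_bij[OF fW, symmetric]) simp
    also have "\<dots> = det_on W (\<lambda>u v. pcompose (cm W F u v) b)"
      unfolding b_def by (rule det_on_cong) (rule cm_join_rr[OF G H])
    also have "\<dots> = pcompose (lap_charpoly W F) b" by (simp add: det_on_pcompose lap_charpoly_cm)
    finally show ?thesis .
  qed
  have rowA: "(\<Sum>j<n. A $$ (i,j)) = a" if i: "i < n" for i
  proof -
    have "(\<Sum>j<n. A $$ (i,j)) = (\<Sum>j\<in>{0..<n}. cm ?J ?JE (Inl (fV i)) (Inl (fV j)))"
      using i by (simp add: A_def lessThan_atLeast0)
    also have "\<dots> = (\<Sum>v\<in>V. cm ?J ?JE (Inl (fV i)) (Inl v))"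
      by (rule sum.reindex_bij_betw[OF fV])
    also have "\<dots> = (\<Sum>v\<in>V. pcompose (cm V E (fV i) v) a)"
      unfolding a_def using fVin[OF i] by (intro sum.cong refl cm_join_ll[OF G H])
    also have "\<dots> = a" unfolding pcompose_sum[symmetric] rowsum_cm[OF G fVin[OF i]] by (simp add: pcompose_pCons)
    finally show ?thesis .
  qed
  have rowB: "(\<Sum>j<m. B $$ (i,j)) = b" if i: "i < m" for i
  proof -
    have "(\<Sum>j<m. B $$ (i,j)) = (\<Sum>j\<in>{0..<m}. cm ?J ?JE (Inr (fW i)) (Inr (fW j)))"
      using i by (simp add: B_def lessThan_atLeast0)
    also have "\<dots> = (\<Sum>v\<in>W. cm ?J ?JE (Inr (fW i)) (Inr v))"
      by (rule sum.reindex_bij_betw[OF fW])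
    also have "\<dots> = (\<Sum>v\<in>W. pcompose (cm W F (fW i) v) b)"
      unfolding b_def using fWin[OF i] by (intro sum.cong refl cm_join_rr[OF G H])
    also have "\<dots> = b" unfolding pcompose_sum[symmetric] rowsum_cm[OF H fWin[OF i]] by (simp add: pcompose_pCons)
    finally show ?thesis .
  qed
  have a0: "a \<noteq> 0" unfolding a_def by simp
  show ?thesis
    using block_det[OF cA cB m0 a0 rowA rowB] unfolding P detA detB n_def m_def .
qed

lemma charpoly_coeff:
  assumes fin: "finite V"
  shows "coeff (lap_charpoly V E) (card V) = 1"
proof -
  have "coeff (lap_charpoly V E) (1 * card V) = det_on V (\<lambda>i j. coeff (cm V E i j) 1)"
    unfolding lap_charpoly_cm by (rule coeff_det_on(1)[OF fin]) (auto simp: cm_def)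
  also have "\<dots> = det_on V (\<lambda>i j. if i = j then 1 else 0)"
    by (rule det_on_cong) (auto simp: cm_def)
  also have "\<dots> = 1" using det_on_diag[OF fin, of "\<lambda>_. 1"] by simp
  finally show ?thesis by simp
qed

lemma charpoly_nz: "finite V \<Longrightarrow> lap_charpoly V E \<noteq> 0"
  using charpoly_coeff[of V E] by auto

lemma part1:
  assumes G1: "graph V1 E1" and G2: "graph V2 E2" and H: "graph W F" and Wne: "W \<noteq> {}"
    and card: "card V1 = card V2"
    and spec: "lap_spectrum V1 E1 = lap_spectrum V2 E2"
  shows "lap_spectrum (join_V V1 W) (join_E V1 E1 W F) = lap_spectrum (join_V V2 W) (join_E V2 E2 W F)"
proof -
  define a where "a = [:- real (card W), 1:]"
  define b where "b = [:- real (card V1), 1:]"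
  define c where "c = a * b - of_nat (card V1) * of_nat (card W)"
  have finW: "finite W" using H graph_finite by blast
  have fin1: "finite V1" using G1 graph_finite by blast
  have fin2: "finite V2" using G2 graph_finite by blast
  have a0: "a \<noteq> 0" and b0: "b \<noteq> 0" unfolding a_def b_def by auto
  have c0: "c \<noteq> 0"
  proof
    assume "c = 0"
    then have "poly c (-1) = 0" by simp
    moreover have "poly c (-1) = 1 + real (card V1) + real (card W)"
      unfolding c_def a_def b_def by (simp add: algebra_simps)
    ultimately show False by simp
  qed
  have dega: "degree a > 0" and degb: "degree b > 0" unfolding a_def b_def by auto
  have J1: "a * b * lap_charpoly (join_V V1 W) (join_E V1 E1 W F)
     = c * pcompose (lap_charpoly V1 E1) a * pcompose (lap_charpoly W F) b"
    using join_charpoly[OF G1 H Wne] unfolding a_def b_def c_def .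
  have J2: "a * b * lap_charpoly (join_V V2 W) (join_E V2 E2 W F)
     = c * pcompose (lap_charpoly V2 E2) a * pcompose (lap_charpoly W F) b"
    using join_charpoly[OF G2 H Wne] unfolding a_def b_def c_def card .
  have nzW: "pcompose (lap_charpoly W F) b \<noteq> 0"
    using pcompose_eq_0[OF _ degb] charpoly_nz[OF finW] by blast
  have nz1: "pcompose (lap_charpoly V1 E1) a \<noteq> 0"
    using pcompose_eq_0[OF _ dega] charpoly_nz[OF fin1] by blast
  have nz2: "pcompose (lap_charpoly V2 E2) a \<noteq> 0"
    using pcompose_eq_0[OF _ dega] charpoly_nz[OF fin2] by blast
  have jn1: "lap_charpoly (join_V V1 W) (join_E V1 E1 W F) \<noteq> 0"
    by (rule charpoly_nz) (simp add: join_V_def fin1 finW)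
  have jn2: "lap_charpoly (join_V V2 W) (join_E V2 E2 W F) \<noteq> 0"
    by (rule charpoly_nz) (simp add: join_V_def fin2 finW)
  have ab0: "a * b \<noteq> 0" using a0 b0 by simp
  have sh: "proots (pcompose (lap_charpoly V1 E1) a) = proots (pcompose (lap_charpoly V2 E2) a)"
    unfolding a_def by (rule proots_shift_eq) (use spec in \<open>simp add: lap_spectrum_def\<close>)
  have "proots (a * b) + lap_spectrum (join_V V1 W) (join_E V1 E1 W F)
      = proots (a * b * lap_charpoly (join_V V1 W) (join_E V1 E1 W F))"
    unfolding lap_spectrum_def by (rule proots_mult[OF ab0 jn1, symmetric])
  also have "\<dots> = proots c + proots (pcompose (lap_charpoly V1 E1) a) + proots (pcompose (lap_charpoly W F) b)"
    unfolding J1 using c0 nz1 nzW by (simp add: proots_mult)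
  also have "\<dots> = proots c + proots (pcompose (lap_charpoly V2 E2) a) + proots (pcompose (lap_charpoly W F) b)"
    using sh by simp
  also have "\<dots> = proots (a * b * lap_charpoly (join_V V2 W) (join_E V2 E2 W F))"
    unfolding J2 using c0 nz2 nzW by (simp add: proots_mult)
  also have "\<dots> = proots (a * b) + lap_spectrum (join_V V2 W) (join_E V2 E2 W F)"
    unfolding lap_spectrum_def by (rule proots_mult[OF ab0 jn2])
  finally show ?thesis by simp
qed

definition zm :: "'a set \<Rightarrow> ('a \<Rightarrow> 'a \<Rightarrow> bool) \<Rightarrow> 'a \<Rightarrow> 'a \<Rightarrow> real poly" where
  "zm V E x y = (if x = y then 1 else 0) - [:Defs.adj_mat E x y:] * [:0, 1:]
     + [:(if x = y then real (deg V E x) else 0) - (if x = y then 1 else 0):] * [:0, 1:] ^ 2"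

definition zp :: "'a set \<Rightarrow> ('a \<Rightarrow> 'a \<Rightarrow> bool) \<Rightarrow> real poly" where
  "zp V E = det_on V (zm V E)"

definition Qp :: "real poly" where "Qp = 1 - [:0, 1:] ^ 2"

lemma X2_monom: "([:0, 1:] :: real poly) ^ 2 = monom 1 2"
  by (simp add: numeral_2_eq_2 monom_Suc monom_0 power2_eq_square)

lemma ihara_zp:
  "ihara_zeta V E = (let n = card V; m = num_edges E;
          pre = (if m \<le> n then fps_of_poly Qp ^ (n - m) else inverse (fps_of_poly Qp ^ (m - n)))
      in pre * inverse (fps_of_poly (zp V E)))"
proof -
  have "fps_of_poly (zp V E) = det_on V (\<lambda>x y. fps_of_poly (zm V E x y))"
    unfolding zp_def by (rule det_on_fps_of_poly[symmetric])
  also have "(\<lambda>x y. fps_of_poly (zm V E x y)) = (\<lambda>x y.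
            (if x = y then 1 else 0) - fps_const (Defs.adj_mat E x y) * fps_X
            + fps_const ((if x = y then real (deg V E x) else 0) - (if x = y then 1 else 0)) * fps_X ^ 2)"
    by (intro ext) (simp add: zm_def fps_of_poly_add fps_of_poly_diff fps_of_poly_mult fps_of_poly_power fps_of_poly_const X2_monom fps_of_poly_monom')
  finally have e1: "fps_of_poly (zp V E) = det_on V (\<lambda>x y.
            (if x = y then 1 else 0) - fps_const (Defs.adj_mat E x y) * fps_X
            + fps_const ((if x = y then real (deg V E x) else 0) - (if x = y then 1 else 0)) * fps_X ^ 2)" .
  have e2: "fps_of_poly Qp = 1 - fps_X ^ 2"
    by (simp add: Qp_def fps_of_poly_diff fps_of_poly_power)
  show ?thesis unfolding ihara_zeta_def Let_def by (simp only: e1[symmetric] e2[symmetric])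
qed

lemma zp_coeff0: assumes "finite V" shows "coeff (zp V E) 0 = 1"
proof -
  have "coeff (zp V E) 0 = poly (zp V E) 0" by (simp add: poly_0_coeff_0)
  also have "poly (zp V E) 0 = det_on V (\<lambda>x y. poly (zm V E x y) 0)"
    unfolding zp_def det_on_def by (simp add: poly_sum poly_prod)
  also have "(\<lambda>x y. poly (zm V E x y) 0) = (\<lambda>x y. if x = y then 1 else 0)"
    by (intro ext) (simp add: zm_def)
  also have "det_on V (\<lambda>x y. if x = y then (1::real) else 0) = 1"
    using det_on_diag[OF \<open>finite V\<close>, of "\<lambda>_. 1"] by simp
  finally show ?thesis .
qed

lemma coeff_lin2: "coeff [:a, b:] 2 = 0"
  by (simp add: numeral_2_eq_2)

lemma zp_top:
  assumes fin: "finite V"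
  shows "coeff (zp V E) (2 * card V) = (\<Prod>x\<in>V. real (deg V E x) - 1)"
        "degree (zp V E) \<le> 2 * card V"
proof -
  have dg: "degree (zm V E i j) \<le> 2" for i j
  proof -
    have "degree ([:Defs.adj_mat E i j:] * [:0, 1:]) \<le> 2"
      by (rule order.trans[OF degree_mult_le]) auto
    moreover have "degree ([:(if i = j then real (deg V E i) else 0) - (if i = j then 1 else 0):] * [:0, 1:] ^ 2) \<le> 2"
      by (rule order.trans[OF degree_mult_le]) (auto simp: degree_power_le X2_monom degree_monom_le)
    moreover have "degree (if i = j then 1 else (0::real poly)) \<le> 2" by simp
    ultimately show ?thesis unfolding zm_def
      by (intro degree_add_le degree_diff_le) auto
  qed
  have "coeff (zp V E) (2 * card V) = det_on V (\<lambda>i j. coeff (zm V E i j) 2)"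
    unfolding zp_def by (rule coeff_det_on(1)[OF fin dg])
  also have "(\<lambda>i j. coeff (zm V E i j) 2) = (\<lambda>i j. if i = j then real (deg V E i) - 1 else 0)"
    by (intro ext) (simp add: zm_def X2_monom coeff_monom coeff_lin2)
  also have "det_on V \<dots> = (\<Prod>x\<in>V. real (deg V E x) - 1)" by (rule det_on_diag[OF fin])
  finally show "coeff (zp V E) (2 * card V) = (\<Prod>x\<in>V. real (deg V E x) - 1)" .
  show "degree (zp V E) \<le> 2 * card V"
    unfolding zp_def by (rule coeff_det_on(2)[OF fin dg])
qed

lemma zeta_mult:
  assumes fin: "finite V"
  shows "ihara_zeta V E * fps_of_poly (zp V E) * fps_of_poly Qp ^ num_edges E = fps_of_poly Qp ^ card V"
proof -
  define q where "q = fps_of_poly Qp"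
  have q0: "fps_nth q 0 = 1" unfolding q_def Qp_def by (simp add: X2_monom)
  have qk0: "fps_nth (q ^ k) 0 = 1" for k using q0 by (simp add: fps_nth_power_0)
  have z0: "fps_nth (fps_of_poly (zp V E)) 0 \<noteq> 0" using zp_coeff0[OF fin] by simp
  have iz: "inverse (fps_of_poly (zp V E)) * fps_of_poly (zp V E) = 1"
    by (rule inverse_mult_eq_1[OF z0])
  define n where "n = card V"
  define m where "m = num_edges E"
  have pre: "(if m \<le> n then q ^ (n - m) else inverse (q ^ (m - n))) * q ^ m = q ^ n"
  proof (cases "m \<le> n")
    case True then show ?thesis by (simp add: power_add[symmetric])
  next
    case False
    then have "q ^ m = q ^ (m - n) * q ^ n" by (simp add: power_add[symmetric])
    moreover have "inverse (q ^ (m - n)) * q ^ (m - n) = 1"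
      by (rule inverse_mult_eq_1) (simp add: qk0)
    ultimately show ?thesis using False by (simp add: mult.assoc[symmetric])
  qed
  have "ihara_zeta V E * fps_of_poly (zp V E) * q ^ m
     = ((if m \<le> n then q ^ (n - m) else inverse (q ^ (m - n))) * q ^ m) *
        (inverse (fps_of_poly (zp V E)) * fps_of_poly (zp V E))"
    unfolding ihara_zp Let_def q_def[symmetric] n_def[symmetric] m_def[symmetric] by (simp add: ac_simps)
  also have "\<dots> = q ^ n" using pre iz by simp
  finally show ?thesis unfolding q_def m_def n_def .
qed

lemma zeta_cancel:
  assumes fin1: "finite V1" and fin2: "finite V2" and card: "card V1 = card V2"
    and c1: "coeff (zp V1 E1) (2 * card V1) \<noteq> 0" and c2: "coeff (zp V2 E2) (2 * card V2) \<noteq> 0"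
    and eq: "ihara_zeta V1 E1 = ihara_zeta V2 E2"
  shows "zp V1 E1 = zp V2 E2"
proof -
  define q where "q = fps_of_poly Qp"
  define Z where "Z = ihara_zeta V1 E1"
  have m1: "Z * (fps_of_poly (zp V1 E1) * q ^ num_edges E1) = q ^ card V1"
    using zeta_mult[OF fin1, of E1] unfolding Z_def q_def by (simp add: mult.assoc)
  have m2: "Z * (fps_of_poly (zp V2 E2) * q ^ num_edges E2) = q ^ card V1"
    using zeta_mult[OF fin2, of E2] unfolding Z_def q_def eq card by (simp add: mult.assoc)
  have qn: "q ^ card V1 \<noteq> 0"
  proof
    assume "q ^ card V1 = 0"
    then have "fps_nth (q ^ card V1) 0 = 0" by simp
    moreover have "fps_nth (q ^ card V1) 0 = 1" unfolding q_def Qp_def by (simp add: fps_nth_power_0 X2_monom)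
    ultimately show False by simp
  qed
  have Z0: "Z \<noteq> 0" using m1 qn by auto
  have "fps_of_poly (zp V1 E1) * q ^ num_edges E1 = fps_of_poly (zp V2 E2) * q ^ num_edges E2"
    using m1 m2 Z0 by (metis mult_left_cancel)
  then have P: "zp V1 E1 * Qp ^ num_edges E1 = zp V2 E2 * Qp ^ num_edges E2"
    unfolding q_def by (simp add: fps_of_poly_mult fps_of_poly_power[symmetric] fps_of_poly_eq_iff)
  have Qe: "Qp = [:1, 0, -1:]" unfolding Qp_def by (simp add: power2_eq_square one_pCons)
  have Q0: "Qp \<noteq> 0" and dQ: "degree Qp = 2" unfolding Qe by (simp_all add: numeral_2_eq_2)
  have z1: "zp V1 E1 \<noteq> 0" using c1 by auto
  have z2: "zp V2 E2 \<noteq> 0" using c2 by auto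
  have d1: "degree (zp V1 E1) = 2 * card V1"
    using le_degree[OF c1] zp_top(2)[OF fin1, of E1] by simp
  have d2: "degree (zp V2 E2) = 2 * card V1"
    using le_degree[OF c2] zp_top(2)[OF fin2, of E2] card by simp
  have "degree (zp V1 E1 * Qp ^ num_edges E1) = 2 * card V1 + num_edges E1 * 2"
    using z1 Q0 d1 dQ by (simp add: degree_mult_eq degree_power_eq)
  moreover have "degree (zp V2 E2 * Qp ^ num_edges E2) = 2 * card V1 + num_edges E2 * 2"
    using z2 Q0 d2 dQ by (simp add: degree_mult_eq degree_power_eq)
  ultimately have "num_edges E1 = num_edges E2" using P by simp
  then show ?thesis using P Q0 by simp
qed

lemma join_top:
  assumes G: "graph V E" and H: "graph W F"
  shows "coeff (zp (join_V V W) (join_E V E W F)) (2 * card (join_V V W)) =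
     (\<Prod>v\<in>V. real (deg V E v) + real (card W) - 1) * (\<Prod>w\<in>W. real (deg W F w) + real (card V) - 1)"
proof -
  have finV: "finite V" and finW: "finite W" using G H graph_finite by blast+
  have fin: "finite (join_V V W)" by (simp add: join_V_def finV finW)
  let ?d = "deg (join_V V W) (join_E V E W F)"
  have "coeff (zp (join_V V W) (join_E V E W F)) (2 * card (join_V V W)) = (\<Prod>x\<in>join_V V W. real (?d x) - 1)"
    by (rule zp_top(1)[OF fin])
  also have "\<dots> = (\<Prod>x\<in>Inl ` V. real (?d x) - 1) * (\<Prod>x\<in>Inr ` W. real (?d x) - 1)"
    unfolding join_V_def by (rule prod.union_disjoint) (auto simp: finV finW)
  also have "(\<Prod>x\<in>Inl ` V. real (?d x) - 1) = (\<Prod>v\<in>V. real (deg V E v) + real (card W) - 1)"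
    by (subst prod.reindex) (auto simp: deg_join_Inl[OF G H] intro!: prod.cong)
  also have "(\<Prod>x\<in>Inr ` W. real (?d x) - 1) = (\<Prod>w\<in>W. real (deg W F w) + real (card V) - 1)"
    by (subst prod.reindex) (auto simp: deg_join_Inr[OF G H] intro!: prod.cong)
  finally show ?thesis .
qed

definition dpoly :: "'a set \<Rightarrow> ('a \<Rightarrow> 'a \<Rightarrow> bool) \<Rightarrow> real poly" where
  "dpoly V E = (\<Prod>v\<in>V. [:real (deg V E v) - 1, 1:])"

lemma poly_dpoly: "poly (dpoly V E) x = (\<Prod>v\<in>V. real (deg V E v) + x - 1)"
  unfolding dpoly_def poly_prod by (intro prod.cong) auto

lemma sum_singleton_mset: "finite A \<Longrightarrow> (\<Sum>v\<in>A. {#f v#}) = image_mset f (mset_set A)"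
  by (induction A rule: finite_induct) auto

lemma proots_dpoly:
  assumes "finite V"
  shows "proots (dpoly V E) = image_mset (\<lambda>d. 1 - real d) (degree_seq V E)"
proof -
  have "proots (dpoly V E) = (\<Sum>v\<in>V. proots [:real (deg V E v) - 1, 1:])"
    unfolding dpoly_def by (rule proots_prod) simp
  also have "\<dots> = (\<Sum>v\<in>V. {#1 - real (deg V E v)#})" by simp
  also have "\<dots> = image_mset (\<lambda>v. 1 - real (deg V E v)) (mset_set V)" by (rule sum_singleton_mset[OF assms])
  also have "\<dots> = image_mset (\<lambda>d. 1 - real d) (degree_seq V E)"
    unfolding degree_seq_def by (simp add: image_mset.compositionality comp_def)
  finally show ?thesis .
qed

lemma dpoly_props:
  assumes "finite V"
  shows "coeff (dpoly V E) (card V) = 1" "degree (dpoly V E) \<le> card V"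
  using coeff_prod_bound[OF assms, of "\<lambda>v. [:real (deg V E v) - 1, 1:]" 1]
  unfolding dpoly_def by auto

lemma dpoly_inj:
  assumes "finite V1" "finite V2" "dpoly V1 E1 = dpoly V2 E2"
  shows "degree_seq V1 E1 = degree_seq V2 E2"
proof -
  have e: "image_mset (\<lambda>d. 1 - real d) (degree_seq V1 E1) = image_mset (\<lambda>d. 1 - real d) (degree_seq V2 E2)"
    using proots_dpoly[OF assms(1), of E1] proots_dpoly[OF assms(2), of E2] assms(3) by simp
  have "image_mset (\<lambda>y. nat \<lfloor>1 - y\<rfloor>) (image_mset (\<lambda>d. 1 - real d) X) = X" for X :: "nat multiset"
    by (simp add: image_mset.compositionality comp_def)
  from this[of "degree_seq V1 E1"] this[of "degree_seq V2 E2"] e show ?thesis by metis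
qed

lemma small_degree_seq:
  assumes G: "graph V E" and c: "card V \<le> 1"
  shows "degree_seq V E = replicate_mset (card V) 0"
proof -
  have fin: "finite V" using G graph_finite by blast
  have "deg V E v = 0" if v: "v \<in> V" for v
  proof -
    have "V = {v}" using c v fin card_le_Suc0_iff_eq[OF fin] by auto
    then have "{y \<in> V. E v y} = {}" using G unfolding graph_def by auto
    then show ?thesis unfolding deg_def by (simp only: card.empty)
  qed
  then have "degree_seq V E = image_mset (\<lambda>_. 0) (mset_set V)"
    unfolding degree_seq_def by (intro image_mset_cong) (simp add: fin)
  then show ?thesis by (simp add: image_mset_const_eq fin)
qed

lemma card_join_V: "finite V \<Longrightarrow> finite W \<Longrightarrow> card (join_V V W) = card V + card W"
  unfolding join_V_def by (subst card_Un_disjoint) (auto simp: card_image)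

theorem proposition4p6:
  fixes V1 :: "'a set" and E1 :: "'a \<Rightarrow> 'a \<Rightarrow> bool"
    and V2 :: "'b set" and E2 :: "'b \<Rightarrow> 'b \<Rightarrow> bool" and n :: nat
  assumes "graph V1 E1" and "graph V2 E2"
    and "card V1 = n" and "card V2 = n"
    and "lap_spectrum V1 E1 = lap_spectrum V2 E2"
    and "degree_seq V1 E1 \<noteq> degree_seq V2 E2"
  shows "(\<forall>(W :: nat set) F. graph W F \<and> W \<noteq> {} \<and>
             ((has_isolated V1 E1 \<or> has_isolated V2 E2) \<longrightarrow> card W \<ge> 2) \<longrightarrow>
           lap_spectrum (join_V V1 W) (join_E V1 E1 W F)
             = lap_spectrum (join_V V2 W) (join_E V2 E2 W F))
       \<and> (\<exists>S :: int set. finite S \<and> card S \<le> n - 1 \<and>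
           (\<forall>(W :: nat set) F. graph W F \<and> W \<noteq> {} \<and>
             ((has_isolated V1 E1 \<or> has_isolated V2 E2) \<longrightarrow> card W \<ge> 2) \<and>
             int (card W) \<notin> S \<longrightarrow>
             ihara_zeta (join_V V1 W) (join_E V1 E1 W F)
               \<noteq> ihara_zeta (join_V V2 W) (join_E V2 E2 W F)))"
proof -
  note G1 = assms(1) and G2 = assms(2) and c1 = assms(3) and c2 = assms(4)
  have fin1: "finite V1" and fin2: "finite V2" using G1 G2 graph_finite by blast+
  have n2: "n \<ge> 2"
  proof (rule ccontr)
    assume "\<not> n \<ge> 2"
    then have "card V1 \<le> 1" "card V2 \<le> 1" using c1 c2 by auto
    then have "degree_seq V1 E1 = degree_seq V2 E2"
      using small_degree_seq[OF G1] small_degree_seq[OF G2] c1 c2 by simp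
    then show False using assms(6) by simp
  qed
  have P1: "\<forall>(W :: nat set) F. graph W F \<and> W \<noteq> {} \<and>
             ((has_isolated V1 E1 \<or> has_isolated V2 E2) \<longrightarrow> card W \<ge> 2) \<longrightarrow>
           lap_spectrum (join_V V1 W) (join_E V1 E1 W F)
             = lap_spectrum (join_V V2 W) (join_E V2 E2 W F)"
    using part1[OF G1 G2 _ _ _ assms(5)] c1 c2 by auto
  define Dd where "Dd = dpoly V1 E1 - dpoly V2 E2"
  define S where "S = {k::int. poly Dd (of_int k) = 0}"
  have Dd0: "Dd \<noteq> 0"
    using dpoly_inj[OF fin1 fin2] assms(6) unfolding Dd_def by auto
  have cDd: "coeff Dd n = 0" unfolding Dd_def using dpoly_props(1)[OF fin1, of E1] dpoly_props(1)[OF fin2, of E2] c1 c2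
    by simp
  have dDd: "degree Dd \<le> n" unfolding Dd_def using dpoly_props(2)[OF fin1, of E1] dpoly_props(2)[OF fin2, of E2] c1 c2
    by (intro degree_diff_le) auto
  have dDd': "degree Dd \<le> n - 1"
  proof (rule ccontr)
    assume "\<not> degree Dd \<le> n - 1"
    then have "degree Dd = n" using dDd by simp
    then have "lead_coeff Dd = 0" using cDd by simp
    then show False using Dd0 by simp
  qed
  have finR: "finite {x. poly Dd x = 0}" by (rule poly_roots_finite[OF Dd0])
  have sub: "(of_int :: int \<Rightarrow> real) ` S \<subseteq> {x. poly Dd x = 0}" unfolding S_def by auto
  have inj: "inj_on (of_int :: int \<Rightarrow> real) S" by (auto simp: inj_on_def)
  have finS: "finite S" using finite_subset[OF sub finR] finite_image_iff[OF inj] by blast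
  have "card S = card ((of_int :: int \<Rightarrow> real) ` S)" using card_image[OF inj] by simp
  also have "\<dots> \<le> card {x. poly Dd x = 0}" by (rule card_mono[OF finR sub])
  also have "\<dots> \<le> degree Dd" by (rule card_poly_roots_bound[OF Dd0])
  finally have cS: "card S \<le> n - 1" using dDd' by simp
  have P2: "\<forall>(W :: nat set) F. graph W F \<and> W \<noteq> {} \<and>
             ((has_isolated V1 E1 \<or> has_isolated V2 E2) \<longrightarrow> card W \<ge> 2) \<and>
             int (card W) \<notin> S \<longrightarrow>
             ihara_zeta (join_V V1 W) (join_E V1 E1 W F)
               \<noteq> ihara_zeta (join_V V2 W) (join_E V2 E2 W F)"
  proof (intro allI impI notI)
    fix W :: "nat set" and F
    assume h: "graph W F \<and> W \<noteq> {} \<and>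
             ((has_isolated V1 E1 \<or> has_isolated V2 E2) \<longrightarrow> card W \<ge> 2) \<and> int (card W) \<notin> S"
      and eq: "ihara_zeta (join_V V1 W) (join_E V1 E1 W F) = ihara_zeta (join_V V2 W) (join_E V2 E2 W F)"
    have H: "graph W F" and Wne: "W \<noteq> {}" and iso: "(has_isolated V1 E1 \<or> has_isolated V2 E2) \<longrightarrow> card W \<ge> 2"
      and nS: "int (card W) \<notin> S" using h by auto
    have finW: "finite W" using H graph_finite by blast
    define m where "m = card W"
    have m1: "m \<ge> 1" using finW Wne unfolding m_def by (simp add: Suc_le_eq card_gt_0_iff)
    define C where "C = (\<Prod>w\<in>W. real (deg W F w) + real n - 1)"
    have C0: "C \<noteq> 0" unfolding C_def using finW n2 by (auto simp: prod_zero_iff)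
    define A1 where "A1 = (\<Prod>v\<in>V1. real (deg V1 E1 v) + real m - 1)"
    define A2 where "A2 = (\<Prod>v\<in>V2. real (deg V2 E2 v) + real m - 1)"
    have A10: "A1 \<noteq> 0"
    proof -
      have "real (deg V1 E1 v) + real m - 1 \<noteq> 0" if v: "v \<in> V1" for v
      proof
        assume "real (deg V1 E1 v) + real m - 1 = 0"
        then have "deg V1 E1 v = 0" "m = 1" using m1 by linarith+
        then have "has_isolated V1 E1" using v unfolding has_isolated_def by blast
        then show False using iso \<open>m = 1\<close> unfolding m_def by simp
      qed
      then show ?thesis unfolding A1_def using fin1 by (simp add: prod_zero_iff)
    qed
    have A20: "A2 \<noteq> 0"
    proof -
      have "real (deg V2 E2 v) + real m - 1 \<noteq> 0" if v: "v \<in> V2" for v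
      proof
        assume "real (deg V2 E2 v) + real m - 1 = 0"
        then have "deg V2 E2 v = 0" "m = 1" using m1 by linarith+
        then have "has_isolated V2 E2" using v unfolding has_isolated_def by blast
        then show False using iso \<open>m = 1\<close> unfolding m_def by simp
      qed
      then show ?thesis unfolding A2_def using fin2 by (simp add: prod_zero_iff)
    qed
    have t1: "coeff (zp (join_V V1 W) (join_E V1 E1 W F)) (2 * card (join_V V1 W)) = A1 * C"
      using join_top[OF G1 H] c1 unfolding A1_def C_def m_def by simp
    have t2: "coeff (zp (join_V V2 W) (join_E V2 E2 W F)) (2 * card (join_V V2 W)) = A2 * C"
      using join_top[OF G2 H] c2 unfolding A2_def C_def m_def by simp
    have cj: "card (join_V V1 W) = card (join_V V2 W)"
      using card_join_V[OF fin1 finW] card_join_V[OF fin2 finW] c1 c2 by simp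
    have fj1: "finite (join_V V1 W)" and fj2: "finite (join_V V2 W)"
      by (simp_all add: join_V_def fin1 fin2 finW)
    have "zp (join_V V1 W) (join_E V1 E1 W F) = zp (join_V V2 W) (join_E V2 E2 W F)"
      by (rule zeta_cancel[OF fj1 fj2 cj _ _ eq]) (use t1 t2 A10 A20 C0 in simp_all)
    then have "A1 * C = A2 * C" using t1 t2 cj by metis
    then have "A1 = A2" using C0 by simp
    then have "poly Dd (real m) = 0" unfolding Dd_def A1_def A2_def by (simp add: poly_dpoly)
    then have "int m \<in> S" unfolding S_def by simp
    then show False using nS unfolding m_def by simp
  qed
  show ?thesis using P1 P2 finS cS by blast
qed

end
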